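(* Let $k\ge4$ be even and let $G$ be a $k$-uniform hypergraph. Then the number of minimal canonical H-eigenvectors of the signless Laplacian tensor $\mathcal D+\mathcal A$ corresponding to the eigenvalue $0$, counted with $\mathbf x$ and $-\mathbf x$ identified, equals the number of odd-bipartite connected components of $G$ (counted with multiplicity as explained below).
   Context: A $k$-uniform hypergraph $G=(V,E)$ has vertex set $V=[n]$ ($n\ge k$) and nonempty edge set $E$ of $k$-element subsets; $E_i=\{e\in E:i\in e\}$, $d_i=|E_i|$. Connected components are maximal sets of vertices pairwise joined by chains of edges with consecutive edges intersecting; an isolated vertex (singleton) is also a connected component. $\mathcal A$: $a_{i_1\dots i_k}=\frac1{(k-1)!}$ if $\{i_1,\dots,i_k\}\in E$, else $0$; $\mathcal D$ diagonal with $d_{i\dots i}=d_i$; so $((\mathcal D+\mathcal A)\mathbf x^{k-1})_i=d_ix_i^{k-1}+\sum_{e\in E_i}\prod_{j\in e\setminus\{i\}}x_j$. A nonzero $\mathbf x\in\mathbb C^n$ is an eigenvector of $\mathcal T$ for eigenvalue $\lambda$ if $(\mathcal T\mathbf x^{k-1})_i=\lambda x_i^{k-1}$ for all $i$. An H-eigenvector is a real eigenvector. An eigenvector is canonical if $\max_i|x_i|=1$. An eigenvector $\mathbf x$ of eigenvalue $0$ is minimal if there is no eigenvector of eigenvalue $0$ whose support $\{i:y_i\neq0\}$ is strictly contained in that of $\mathbf x$. Counting of odd-bipartite connected components: each singleton component contributes $1$; each connected component $C$ with $|C|\ge2$ contributes the number of unordered partitions $\{S,T\}$ of $C$ with $S,T\neq\emptyset$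 such that $|e\cap S|$ is odd for every edge $e\subseteq C$ (a component with no such partition contributes $0$). The number of odd-bipartite connected components of $G$ is the sum of these contributions. *)

theory Defs
  imports Complex_Main
begin

definition k_uniform_hypergraph :: "nat \<Rightarrow> nat \<Rightarrow> nat set set \<Rightarrow> bool" where
  "k_uniform_hypergraph k n E \<longleftrightarrow> n \<ge> k \<and> E \<noteq> {} \<and>
     (\<forall>e\<in>E. e \<subseteq> {1..n} \<and> card e = k)"

definition edges_at :: "nat set set \<Rightarrow> nat \<Rightarrow> nat set set" where
  "edges_at E i = {e\<in>E. i \<in> e}"

definition degree :: "nat set set \<Rightarrow> nat \<Rightarrow> nat" where
  "degree E i = card (edges_at E i)"

text \<open>The i-th entry of (D + A) x^(k-1).\<close>
definition signless_lap_apply :: "nat \<Rightarrow> nat set set \<Rightarrow> (nat \<Rightarrow> complex) \<Rightarrow> nat \<Rightarrow> complex" where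
  "signless_lap_apply k E x i =
     of_nat (degree E i) * x i ^ (k - 1) + (\<Sum>e\<in>edges_at E i. \<Prod>j\<in>e - {i}. x j)"

definition is_vec :: "nat \<Rightarrow> (nat \<Rightarrow> complex) \<Rightarrow> bool" where
  "is_vec n x \<longleftrightarrow> (\<forall>i. i \<notin> {1..n} \<longrightarrow> x i = 0)"

definition slap_eigenvector :: "nat \<Rightarrow> nat \<Rightarrow> nat set set \<Rightarrow> complex \<Rightarrow> (nat \<Rightarrow> complex) \<Rightarrow> bool" where
  "slap_eigenvector k n E lam x \<longleftrightarrow> is_vec n x \<and> (\<exists>i\<in>{1..n}. x i \<noteq> 0) \<and>
     (\<forall>i\<in>{1..n}. signless_lap_apply k E x i = lam * x i ^ (k - 1))"

definition supp :: "nat \<Rightarrow> (nat \<Rightarrow> complex) \<Rightarrow> nat set" where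
  "supp n x = {i\<in>{1..n}. x i \<noteq> 0}"

definition is_real_vec :: "nat \<Rightarrow> (nat \<Rightarrow> complex) \<Rightarrow> bool" where
  "is_real_vec n x \<longleftrightarrow> (\<forall>i\<in>{1..n}. x i \<in> \<real>)"

definition canonical :: "nat \<Rightarrow> (nat \<Rightarrow> complex) \<Rightarrow> bool" where
  "canonical n x \<longleftrightarrow> Max ((\<lambda>i. cmod (x i)) ` {1..n}) = 1"

definition minimal_zero_eigenvector :: "nat \<Rightarrow> nat \<Rightarrow> nat set set \<Rightarrow> (nat \<Rightarrow> complex) \<Rightarrow> bool" where
  "minimal_zero_eigenvector k n E x \<longleftrightarrow> slap_eigenvector k n E 0 x \<and>
     \<not> (\<exists>y. slap_eigenvector k n E 0 y \<and> supp n y \<subset> supp n x)"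

definition min_canon_H_zero_eigvecs :: "nat \<Rightarrow> nat \<Rightarrow> nat set set \<Rightarrow> (nat \<Rightarrow> complex) set" where
  "min_canon_H_zero_eigvecs k n E =
     {x. minimal_zero_eigenvector k n E x \<and> is_real_vec n x \<and> canonical n x}"

text \<open>Connected components: classes of the reflexive-transitive closure of
  "lie in a common edge" on {1..n} (isolated vertices are singleton components).\<close>
definition hadj :: "nat set set \<Rightarrow> (nat \<times> nat) set" where
  "hadj E = {(i, j). \<exists>e\<in>E. i \<in> e \<and> j \<in> e}"

definition components :: "nat \<Rightarrow> nat set set \<Rightarrow> nat set set" where
  "components n E = {1..n} // ((hadj E)\<^sup>*)"

definition odd_bipartitions :: "nat set set \<Rightarrow> nat set \<Rightarrow> nat set set set" where
  "odd_bipartitions E C = {P. \<exists>S T. P = {S, T} \<and> S \<noteq> {} \<and> T \<noteq> {} \<and> S \<inter> T = {} \<and>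
      S \<union> T = C \<and> (\<forall>e\<in>E. e \<subseteq> C \<longrightarrow> odd (card (e \<inter> S)))}"

definition component_contribution :: "nat set set \<Rightarrow> nat set \<Rightarrow> nat" where
  "component_contribution E C = (if card C = 1 then 1 else card (odd_bipartitions E C))"

definition num_odd_bipartite_components :: "nat \<Rightarrow> nat set set \<Rightarrow> nat" where
  "num_odd_bipartite_components n E = (\<Sum>C\<in>components n E. component_contribution E C)"

end

theory Submission imports Defs begin

lemma prod_eq_max:
  fixes f :: "'a \<Rightarrow> real"
  assumes A: "finite A" and f: "\<forall>l\<in>A. 0 \<le> f l \<and> f l \<le> M" and p: "prod f A = M ^ card A"
    and M: "M > 0" and l: "l \<in> A"
  shows "f l = M"
proof (rule ccontr)
  assume "f l \<noteq> M" then have lt: "f l < M" using f l by force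
  have 1: "prod f A = f l * prod f (A - {l})" by (rule prod.remove[OF A l])
  have 2: "prod f (A-{l}) \<le> M ^ card (A - {l})"
  proof -
    have "prod f (A-{l}) \<le> prod (\<lambda>_. M) (A-{l})" using f by (intro prod_mono) simp
    thus ?thesis by simp
  qed
  have 3: "0 \<le> prod f (A-{l})" using f by (intro prod_nonneg) simp
  have 4: "card A = Suc (card (A - {l}))" by (rule card_Suc_Diff1[OF A l, symmetric])
  have "f l * prod f (A - {l}) \<le> f l * M ^ card (A - {l})" using 2 f l by (intro mult_left_mono) simp_all
  also have "\<dots> < M * M ^ card (A - {l})" using lt M by (intro mult_strict_right_mono) simp_all
  also have "\<dots> = M ^ card A" using 4 by simp
  finally have "f l * prod f (A - {l}) < M ^ card A" .
  then show False using 1 p by linarith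
qed

lemma sign_prod:
  fixes x :: "'a \<Rightarrow> complex"
  assumes "finite A" "\<forall>l\<in>A. x l = 1 \<or> x l = -1"
  shows "prod x A = (-1) ^ card {l\<in>A. x l = -1}"
  using assms
proof (induction A rule: finite_induct)
  case empty then show ?case by simp
next
  case (insert a F)
  have IH: "prod x F = (-1) ^ card {l\<in>F. x l = -1}" using insert by simp
  have fin: "finite {l\<in>F. x l = -1}" using insert(1) by simp
  show ?case
  proof (cases "x a = -1")
    case True
    have "{l\<in>insert a F. x l = -1} = insert a {l\<in>F. x l = -1}" using True by auto
    moreover have "a \<notin> {l\<in>F. x l = -1}" using insert(2) by simp
    ultimately have "card {l\<in>insert a F. x l = -1} = Suc (card {l\<in>F. x l = -1})" using fin by simp
    then show ?thesis using insert(1,2) IH True by simp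
  next
    case False
    then have xa: "x a = 1" using insert(4) by simp
    have "{l\<in>insert a F. x l = -1} = {l\<in>F. x l = -1}" using False by auto
    then show ?thesis using insert(1,2) IH xa by simp
  qed
qed

lemma real_unit: "(z::complex) \<in> \<real> \<Longrightarrow> cmod z = 1 \<Longrightarrow> z = 1 \<or> z = -1"
proof -
  assume "z \<in> \<real>" "cmod z = 1"
  then obtain r where r: "z = of_real r" by (auto elim: Reals_cases)
  then have "\<bar>r\<bar> = 1" using \<open>cmod z = 1\<close> by simp
  then have "r = 1 \<or> r = -1" by arith
  then show ?thesis using r by auto
qed

locale hg = fixes k n :: nat and E :: "nat set set"
  assumes kU: "k_uniform_hypergraph k n E" and k4: "k \<ge> 4" and ke: "even k"
begin

abbreviation R where "R \<equiv> (hadj E)\<^sup>*"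

lemma E_sub: "e \<in> E \<Longrightarrow> e \<subseteq> {1..n}" using kU by (auto simp: k_uniform_hypergraph_def)
lemma E_card: "e \<in> E \<Longrightarrow> card e = k" using kU by (auto simp: k_uniform_hypergraph_def)
lemma finE: "finite E"
proof -
  have "E \<subseteq> Pow {1..n}" using E_sub by auto
  thus ?thesis by (rule finite_subset) simp
qed
lemma fin_e: "e \<in> E \<Longrightarrow> finite e" using E_card[of e] k4 by (cases "finite e") auto

lemma hadj_sym: "(a,b) \<in> hadj E \<Longrightarrow> (b,a) \<in> hadj E" by (auto simp: hadj_def)

lemma R_sym: "(a,b) \<in> R \<Longrightarrow> (b,a) \<in> R"
proof (induction rule: rtrancl_induct)
  case base then show ?case by simp
next
  case (step y z) then show ?case
    by (meson converse_rtrancl_into_rtrancl hadj_sym)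
qed

lemma R_range: "(a,b) \<in> R \<Longrightarrow> a \<in> {1..n} \<Longrightarrow> b \<in> {1..n}"
proof (induction rule: rtrancl_induct)
  case base then show ?case by simp
next
  case (step y z) then show ?case using E_sub unfolding hadj_def by blast
qed

lemma cls_sub: "a \<in> {1..n} \<Longrightarrow> R``{a} \<subseteq> {1..n}" using R_range by auto

lemma cls_closed: "b \<in> R``{i} \<Longrightarrow> (b,c) \<in> hadj E \<Longrightarrow> c \<in> R``{i}"
  by (auto intro: rtrancl_into_rtrancl)

lemma cls_eq: "j \<in> R``{i} \<Longrightarrow> R``{j} = R``{i}"
  using R_sym by (auto intro: rtrancl_trans)

lemma edge_in_cls: "b \<in> R``{i} \<Longrightarrow> e \<in> edges_at E b \<Longrightarrow> e \<subseteq> R``{i}"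
  using cls_closed by (auto simp: edges_at_def hadj_def)

lemma edge_disj: "l \<notin> R``{i} \<Longrightarrow> e \<in> edges_at E l \<Longrightarrow> e \<inter> R``{i} = {}"
proof (rule ccontr)
  assume a: "l \<notin> R``{i}" "e \<in> edges_at E l" "e \<inter> R``{i} \<noteq> {}"
  then obtain m where "m \<in> e" "m \<in> R``{i}" by auto
  moreover have "(m,l) \<in> hadj E" using a \<open>m \<in> e\<close> by (auto simp: edges_at_def hadj_def)
  ultimately show False using a cls_closed by blast
qed

lemma comps: "components n E = (\<lambda>i. R``{i}) ` {1..n}"
  by (auto simp: components_def quotient_def)

lemma localB:
  fixes y :: "nat \<Rightarrow> complex" and M :: real
  assumes eq: "signless_lap_apply k E y a = 0"
    and le: "\<forall>e\<in>edges_at E a. \<forall>l\<in>e. cmod (y l) \<le> M" and ya: "cmod (y a) = M"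
  shows "\<forall>e\<in>edges_at E a. \<forall>l\<in>e. cmod (y l) = M"
proof (cases "M = 0")
  case True
  show ?thesis
  proof (intro ballI)
    fix e l assume "e \<in> edges_at E a" "l \<in> e"
    then have "cmod (y l) \<le> M" using le by simp
    then show "cmod (y l) = M" using True by simp
  qed
next
  case False
  then have M: "M > 0" using ya False norm_ge_zero[of "y a"] by linarith
  define EA where "EA = edges_at E a"
  have finEA: "finite EA" unfolding EA_def edges_at_def using finE by simp
  define P where "P e = (\<Prod>j\<in>e-{a}. cmod (y j))" for e
  have cd: "card (e - {a}) = k - 1" if "e \<in> EA" for e
  proof -
    have "e \<in> E" "a \<in> e" using that unfolding EA_def edges_at_def by auto
    then show ?thesis by (simp add: E_card fin_e)
  qed
  have Ple: "P e \<le> M^(k-1)" if "e \<in> EA" for e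
  proof -
    have "e \<in> edges_at E a" using that by (simp add: EA_def)
    then have h: "\<forall>j\<in>e-{a}. 0 \<le> cmod (y j) \<and> cmod (y j) \<le> M" using le by simp
    have "P e \<le> (\<Prod>j\<in>e-{a}. M)" unfolding P_def using h by (intro prod_mono) blast
    thus ?thesis using cd[OF that] by simp
  qed
  have "of_nat (degree E a) * y a ^ (k - 1) = - (\<Sum>e\<in>EA. \<Prod>j\<in>e - {a}. y j)"
    using eq unfolding signless_lap_apply_def EA_def by (simp add: eq_neg_iff_add_eq_0)
  then have "norm (of_nat (degree E a) * y a ^ (k - 1)) = norm (\<Sum>e\<in>EA. \<Prod>j\<in>e - {a}. y j)"
    by simp
  also have "\<dots> \<le> (\<Sum>e\<in>EA. norm (\<Prod>j\<in>e - {a}. y j))" by (rule norm_sum)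
  also have "\<dots> = (\<Sum>e\<in>EA. P e)" unfolding P_def by (simp add: prod_norm)
  finally have "real (card EA) * M^(k-1) \<le> (\<Sum>e\<in>EA. P e)"
    using ya unfolding degree_def EA_def by (simp add: norm_mult norm_power)
  then have "(\<Sum>e\<in>EA. M^(k-1) - P e) \<le> 0" by (simp add: sum_subtractf)
  moreover have "\<forall>e\<in>EA. 0 \<le> M^(k-1) - P e" using Ple by auto
  moreover have "0 \<le> (\<Sum>e\<in>EA. M^(k-1) - P e)" using Ple by (intro sum_nonneg) simp
  ultimately have "(\<Sum>e\<in>EA. M^(k-1) - P e) = 0" by linarith
  then have z: "\<forall>e\<in>EA. M^(k-1) - P e = 0"
    using sum_nonneg_eq_0_iff[OF finEA, of "\<lambda>e. M^(k-1) - P e"] Ple by auto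
  show ?thesis
  proof (intro ballI)
    fix e l assume e: "e \<in> edges_at E a" and l: "l \<in> e"
    show "cmod (y l) = M"
    proof (cases "l = a")
      case True then show ?thesis using ya by simp
    next
      case False
      have eA: "e \<in> EA" using e by (simp add: EA_def)
      have "M^(k-1) - P e = 0" using z eA by blast
      then have "P e = M ^ card (e - {a})" using cd[OF eA] by simp
      moreover have "finite (e - {a})" using e fin_e unfolding edges_at_def by auto
      moreover have "\<forall>j\<in>e-{a}. 0 \<le> cmod (y j) \<and> cmod (y j) \<le> M" using le e by simp
      ultimately show ?thesis using prod_eq_max[of "e - {a}" "\<lambda>j. cmod (y j)" M l] l False M
        unfolding P_def by auto
    qed
  qed
qed


lemma maxprin:
  fixes y :: "nat \<Rightarrow> complex"
  assumes eqs: "\<forall>l\<in>{1..n}. signless_lap_apply k E y l = 0" and i: "i \<in> {1..n}" and yi: "y i \<noteq> 0"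
  shows "\<exists>M>0. \<forall>l\<in>R``{i}. cmod (y l) = M"
proof -
  define C where "C = R``{i}"
  have Csub: "C \<subseteq> {1..n}" unfolding C_def using cls_sub[OF i] .
  have finC: "finite C" using Csub finite_subset by blast
  have iC: "i \<in> C" unfolding C_def by simp
  define M where "M = Max ((\<lambda>l. cmod (y l)) ` C)"
  have "M \<in> (\<lambda>l. cmod (y l)) ` C" unfolding M_def using finC iC by (intro Max_in) auto
  then obtain j where jC: "j \<in> C" and yj: "cmod (y j) = M" by auto
  have Mge: "\<forall>l\<in>C. cmod (y l) \<le> M" unfolding M_def using finC by simp
  have Cj: "R``{j} = C" unfolding C_def using cls_eq jC C_def by blast
  have all: "cmod (y l) = M" if "(j,l) \<in> R" for l
    using that
  proof (induction rule: rtrancl_induct)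
    case base then show ?case using yj by simp
  next
    case (step a b)
    have aC: "a \<in> C" using step.hyps(1) Cj by auto
    have an: "a \<in> {1..n}" using aC Csub by auto
    have eqa: "signless_lap_apply k E y a = 0" using eqs an by simp
    have le: "\<forall>e\<in>edges_at E a. \<forall>l\<in>e. cmod (y l) \<le> M"
    proof (intro ballI)
      fix e l assume e: "e \<in> edges_at E a" and l: "l \<in> e"
      have "e \<subseteq> C" using edge_in_cls[of a i e] aC e unfolding C_def by simp
      then show "cmod (y l) \<le> M" using Mge l by blast
    qed
    have r: "\<forall>e\<in>edges_at E a. \<forall>l\<in>e. cmod (y l) = M" by (rule localB[OF eqa le step.IH])
    obtain e where "e \<in> E" "a \<in> e" "b \<in> e" using step.hyps(2) unfolding hadj_def by blast
    then show ?case using r unfolding edges_at_def by blast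
  qed
  have "cmod (y i) > 0" using yi by simp
  moreover have "cmod (y i) \<le> M" using Mge iC by blast
  ultimately have "M > 0" by linarith
  moreover have "\<forall>l\<in>R``{i}. cmod (y l) = M" using all Cj unfolding C_def by blast
  ultimately show ?thesis by blast
qed


definition vec :: "nat set \<Rightarrow> nat set \<Rightarrow> nat \<Rightarrow> complex" where
  "vec C S l = (if l \<in> S then -1 else if l \<in> C then 1 else 0)"

definition good :: "nat set \<Rightarrow> nat set \<Rightarrow> bool" where
  "good C S \<longleftrightarrow> S \<subseteq> C \<and> (\<forall>e\<in>E. e \<subseteq> C \<longrightarrow> odd (card (e \<inter> S)))"

lemma apply_local:
  assumes b: "b \<in> R``{i}" and zw: "\<forall>l\<in>R``{i}. z l = w l"
  shows "signless_lap_apply k E z b = signless_lap_apply k E w b"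
proof -
  have "(\<Sum>e\<in>edges_at E b. \<Prod>j\<in>e - {b}. z j) = (\<Sum>e\<in>edges_at E b. \<Prod>j\<in>e - {b}. w j)"
  proof (rule sum.cong[OF refl], rule prod.cong[OF refl])
    fix e j assume "e \<in> edges_at E b" "j \<in> e - {b}"
    then have "j \<in> R``{i}" using edge_in_cls[OF b] by blast
    then show "z j = w j" using zw by blast
  qed
  moreover have "z b = w b" using b zw by blast
  ultimately show ?thesis unfolding signless_lap_apply_def by simp
qed

lemma apply_zero:
  assumes l: "l \<notin> R``{i}" and z: "\<forall>m. m \<notin> R``{i} \<longrightarrow> z m = 0"
  shows "signless_lap_apply k E z l = 0"
proof -
  have zl: "z l = 0" using l z by blast
  have "(\<Prod>j\<in>e - {l}. z j) = 0" if e: "e \<in> edges_at E l" for e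
  proof -
    have eE: "e \<in> E" "l \<in> e" using e unfolding edges_at_def by auto
    have "card e \<ge> 2" using E_card[OF eE(1)] k4 by simp
    then have "card (e - {l}) \<ge> 1" using eE fin_e by simp
    then have "e - {l} \<noteq> {}" by (metis card.empty not_one_le_zero)
    then obtain m where m: "m \<in> e - {l}" by blast
    have "m \<notin> R``{i}" using edge_disj[OF l e] m by blast
    then have "z m = 0" using z by blast
    then show ?thesis using m fin_e[OF eE(1)] by (intro prod_zero) auto
  qed
  then have "(\<Sum>e\<in>edges_at E l. \<Prod>j\<in>e - {l}. z j) = 0" by simp
  moreover have "z l ^ (k - 1) = 0" using zl k4 by simp
  ultimately show ?thesis unfolding signless_lap_apply_def by simp
qed

lemma vec_pm: "l \<in> C \<Longrightarrow> vec C S l = 1 \<or> vec C S l = -1"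
  unfolding vec_def by auto

lemma vec_out: "S \<subseteq> C \<Longrightarrow> l \<notin> C \<Longrightarrow> vec C S l = 0"
  unfolding vec_def by auto

lemma vec_neg_iff: "S \<subseteq> C \<Longrightarrow> vec C S l = -1 \<longleftrightarrow> l \<in> S"
  unfolding vec_def by auto

lemma vec_eig:
  assumes i: "i \<in> {1..n}" and g: "good (R``{i}) S"
  shows "slap_eigenvector k n E 0 (vec (R``{i}) S)"
proof -
  define C where "C = R``{i}"
  define x where "x = vec C S"
  have SC: "S \<subseteq> C" using g unfolding good_def C_def by simp
  have Csub: "C \<subseteq> {1..n}" unfolding C_def using cls_sub[OF i] .
  have iC: "i \<in> C" unfolding C_def by simp
  have isv: "is_vec n x" unfolding is_vec_def x_def using vec_out[OF SC] Csub by blast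
  have nz: "x i \<noteq> 0" using vec_pm[OF iC, of S] unfolding x_def by auto
  have eqs: "signless_lap_apply k E x l = 0" if l: "l \<in> {1..n}" for l
  proof (cases "l \<in> C")
    case False
    then show ?thesis using apply_zero[of l i x] vec_out[OF SC] unfolding C_def x_def by blast
  next
    case True
    have xl: "x l = 1 \<or> x l = -1" using vec_pm[OF True] unfolding x_def by simp
    have pe: "(\<Prod>j\<in>e - {l}. x j) = - x l" if e: "e \<in> edges_at E l" for e
    proof -
      have eE: "e \<in> E" "l \<in> e" using e unfolding edges_at_def by auto
      have eC: "e \<subseteq> C" using edge_in_cls[of l i e] True e unfolding C_def by simp
      have pm: "\<forall>m\<in>e. x m = 1 \<or> x m = -1" using eC vec_pm unfolding x_def by blast
      have od: "odd (card (e \<inter> S))" using g eE(1) eC unfolding good_def C_def by blast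
      have "prod x e = (-1) ^ card {m\<in>e. x m = -1}"
        by (rule sign_prod[OF fin_e[OF eE(1)] pm])
      also have "{m\<in>e. x m = -1} = e \<inter> S" unfolding x_def vec_neg_iff[OF SC] by blast
      also have "(-1::complex) ^ card (e \<inter> S) = -1" using od by simp
      finally have "prod x e = -1" .
      then have "x l * (\<Prod>j\<in>e - {l}. x j) = -1"
        using prod.remove[OF fin_e[OF eE(1)] eE(2), of x] by simp
      then show ?thesis
      proof (cases "x l = 1")
        case True then show ?thesis using \<open>x l * _ = -1\<close> by simp
      next
        case False then have "x l = -1" using xl by simp
        then show ?thesis using \<open>x l * _ = -1\<close> by simp
      qed
    qed
    have pw: "x l ^ (k - 1) = x l" using xl ke k4 by (auto simp: power_minus_odd)
    have "(\<Sum>e\<in>edges_at E l. \<Prod>j\<in>e - {l}. x j) = (\<Sum>e\<in>edges_at E l. - x l)"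
      using pe by simp
    then show ?thesis unfolding signless_lap_apply_def degree_def using pw by simp
  qed
  show ?thesis unfolding slap_eigenvector_def using isv nz i eqs unfolding x_def C_def by auto
qed


abbreviation F where "F \<equiv> min_canon_H_zero_eigvecs k n E"

lemma eig_eqs: "slap_eigenvector k n E 0 y \<Longrightarrow> \<forall>l\<in>{1..n}. signless_lap_apply k E y l = 0"
  unfolding slap_eigenvector_def by simp

lemma char2:
  assumes i: "i \<in> {1..n}" and g: "good (R``{i}) S"
  shows "vec (R``{i}) S \<in> F"
proof -
  define C where "C = R``{i}"
  define x where "x = vec C S"
  have SC: "S \<subseteq> C" using g unfolding good_def C_def by simp
  have Csub: "C \<subseteq> {1..n}" unfolding C_def using cls_sub[OF i] .
  have iC: "i \<in> C" unfolding C_def by simp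
  have eig: "slap_eigenvector k n E 0 x" using vec_eig[OF i g] unfolding x_def C_def .
  have suppx: "supp n x = C"
  proof -
    have "x l \<noteq> 0 \<longleftrightarrow> l \<in> C" for l
      using vec_pm[of l C S] vec_out[OF SC, of l] unfolding x_def by auto
    then show ?thesis unfolding supp_def using Csub by auto
  qed
  have minimal: "\<not> (\<exists>y. slap_eigenvector k n E 0 y \<and> supp n y \<subset> supp n x)"
  proof
    assume "\<exists>y. slap_eigenvector k n E 0 y \<and> supp n y \<subset> supp n x"
    then obtain y where ey: "slap_eigenvector k n E 0 y" and ss: "supp n y \<subset> C"
      using suppx by auto
    obtain m where m: "m \<in> {1..n}" "y m \<noteq> 0" using ey unfolding slap_eigenvector_def by auto
    then have "m \<in> supp n y" unfolding supp_def by simp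
    then have mC: "m \<in> C" using ss by auto
    have Cm: "R``{m} = C" using cls_eq[of m i] mC unfolding C_def by simp
    obtain M where M: "M > 0" "\<forall>l\<in>R``{m}. cmod (y l) = M"
      using maxprin[OF eig_eqs[OF ey] m] by blast
    have "C \<subseteq> supp n y"
    proof
      fix l assume l: "l \<in> C"
      then have "cmod (y l) = M" using M Cm by simp
      then have "y l \<noteq> 0" using M by auto
      then show "l \<in> supp n y" unfolding supp_def using l Csub by auto
    qed
    then show False using ss by auto
  qed
  have real: "is_real_vec n x" unfolding is_real_vec_def x_def vec_def by auto
  have can: "canonical n x" unfolding canonical_def
  proof (rule Max_eqI)
    show "finite ((\<lambda>i. cmod (x i)) ` {1..n})" by simp
  next
    fix r assume "r \<in> (\<lambda>i. cmod (x i)) ` {1..n}"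
    then show "r \<le> 1" unfolding x_def vec_def by auto
  next
    have "cmod (x i) = 1" using vec_pm[OF iC, of S] unfolding x_def by auto
    then show "1 \<in> (\<lambda>i. cmod (x i)) ` {1..n}" using i by force
  qed
  show ?thesis unfolding min_canon_H_zero_eigvecs_def minimal_zero_eigenvector_def
    using eig minimal real can unfolding x_def C_def by blast
qed


lemma char1:
  assumes xF: "x \<in> F"
  shows "\<exists>i\<in>{1..n}. \<exists>S. good (R``{i}) S \<and> x = vec (R``{i}) S"
proof -
  have eig: "slap_eigenvector k n E 0 x" and minimal: "\<not> (\<exists>y. slap_eigenvector k n E 0 y \<and> supp n y \<subset> supp n x)"
    and real: "is_real_vec n x" and can: "canonical n x"
    using xF unfolding min_canon_H_zero_eigvecs_def minimal_zero_eigenvector_def by auto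
  have isv: "is_vec n x" using eig unfolding slap_eigenvector_def by simp
  have eqs: "\<forall>l\<in>{1..n}. signless_lap_apply k E x l = 0" using eig_eqs[OF eig] .
  obtain i where i: "i \<in> {1..n}" "x i \<noteq> 0" using eig unfolding slap_eigenvector_def by auto
  define C where "C = R``{i}"
  have Csub: "C \<subseteq> {1..n}" unfolding C_def using cls_sub[OF i(1)] .
  have iC: "i \<in> C" unfolding C_def by simp
  obtain M where M: "M > 0" "\<forall>l\<in>C. cmod (x l) = M"
    using maxprin[OF eqs i] unfolding C_def by blast
  define y where "y l = (if l \<in> C then x l else 0)" for l
  have yout: "\<forall>m. m \<notin> R``{i} \<longrightarrow> y m = 0" unfolding y_def C_def by simp
  have yeqs: "signless_lap_apply k E y l = 0" if l: "l \<in> {1..n}" for l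
  proof (cases "l \<in> C")
    case True
    have "signless_lap_apply k E y l = signless_lap_apply k E x l"
      using apply_local[of l i y x] True unfolding C_def y_def by simp
    then show ?thesis using eqs l by simp
  next
    case False then show ?thesis using apply_zero[OF _ yout] unfolding C_def by blast
  qed
  have ey: "slap_eigenvector k n E 0 y"
    unfolding slap_eigenvector_def is_vec_def
    using yeqs Csub i iC unfolding y_def by auto
  have suppy: "supp n y = C"
  proof -
    have "y l \<noteq> 0 \<longleftrightarrow> l \<in> C" for l
      using M unfolding y_def by auto
    then show ?thesis unfolding supp_def using Csub by auto
  qed
  have "supp n y \<subseteq> supp n x" unfolding supp_def y_def by auto
  then have suppx: "supp n x = C" using minimal ey suppy by blast
  have xout: "x l = 0" if "l \<notin> C" for l
  proof (cases "l \<in> {1..n}")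
    case True then show ?thesis using that suppx unfolding supp_def by blast
  next
    case False then show ?thesis using isv unfolding is_vec_def by blast
  qed
  have M1: "M = 1"
  proof -
    have "Max ((\<lambda>i. cmod (x i)) ` {1..n}) = M"
    proof (rule Max_eqI)
      show "finite ((\<lambda>i. cmod (x i)) ` {1..n})" by simp
    next
      fix r assume "r \<in> (\<lambda>i. cmod (x i)) ` {1..n}"
      then obtain l where l: "r = cmod (x l)" by blast
      show "r \<le> M"
      proof (cases "l \<in> C")
        case True then show ?thesis using M l by simp
      next
        case False then show ?thesis using xout M l by simp
      qed
    next
      show "M \<in> (\<lambda>i. cmod (x i)) ` {1..n}" using M iC i by force
    qed
    then show ?thesis using can unfolding canonical_def by simp
  qed
  have pm: "x l = 1 \<or> x l = -1" if "l \<in> C" for l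
  proof -
    have "x l \<in> \<real>" using real that Csub unfolding is_real_vec_def by blast
    moreover have "cmod (x l) = 1" using M M1 that by simp
    ultimately show ?thesis by (rule real_unit)
  qed
  define S where "S = {l\<in>C. x l = -1}"
  have SC: "S \<subseteq> C" unfolding S_def by auto
  have xv: "x = vec C S"
  proof
    fix l show "x l = vec C S l"
    proof (cases "l \<in> C")
      case True then show ?thesis using pm[OF True] unfolding vec_def S_def by auto
    next
      case False then show ?thesis using xout unfolding vec_def S_def by auto
    qed
  qed
  have oddS: "odd (card (e \<inter> S))" if eE: "e \<in> E" and eC: "e \<subseteq> C" for e
  proof -
    have "card e \<ge> 1" using E_card[OF eE] k4 by simp
    then have "e \<noteq> {}" by (metis card.empty not_one_le_zero)
    then obtain a where ae: "a \<in> e" by blast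
    have aC: "a \<in> C" using ae eC by blast
    have an: "a \<in> {1..n}" using aC Csub by blast
    define EA where "EA = edges_at E a"
    have finEA: "finite EA" unfolding EA_def edges_at_def using finE by simp
    have eEA: "e \<in> EA" unfolding EA_def edges_at_def using eE ae by simp
    define c where "c e' = card (e' \<inter> S)" for e'
    have xa: "x a = 1 \<or> x a = -1" using pm[OF aC] .
    have trm: "x a * (\<Prod>j\<in>e' - {a}. x j) = (-1) ^ c e'" if e': "e' \<in> EA" for e'
    proof -
      have e'E: "e' \<in> E" "a \<in> e'" using e' unfolding EA_def edges_at_def by auto
      have e'C: "e' \<subseteq> C" using edge_in_cls[of a i e'] aC e' unfolding C_def EA_def by simp
      have pm': "\<forall>m\<in>e'. x m = 1 \<or> x m = -1" using e'C pm by blast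
      have "x a * (\<Prod>j\<in>e' - {a}. x j) = prod x e'"
        using prod.remove[OF fin_e[OF e'E(1)] e'E(2), of x] by simp
      also have "\<dots> = (-1) ^ card {m\<in>e'. x m = -1}" by (rule sign_prod[OF fin_e[OF e'E(1)] pm'])
      also have "{m\<in>e'. x m = -1} = e' \<inter> S" using e'C unfolding S_def by blast
      finally show ?thesis unfolding c_def .
    qed
    have xak: "x a * x a ^ (k - 1) = 1"
    proof -
      have "x a * x a ^ (k - 1) = x a ^ k" using k4 by (simp add: power_eq_if)
      also have "\<dots> = 1" using xa ke by auto
      finally show ?thesis .
    qed
    have "0 = x a * signless_lap_apply k E x a" using eqs an by simp
    also have "\<dots> = of_nat (card EA) * (x a * x a ^ (k - 1)) + (\<Sum>e'\<in>EA. x a * (\<Prod>j\<in>e' - {a}. x j))"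
      unfolding signless_lap_apply_def degree_def EA_def by (simp add: algebra_simps sum_distrib_left)
    also have "\<dots> = (\<Sum>e'\<in>EA. 1 + (-1) ^ c e')" using xak trm by (simp add: sum.distrib)
    also have "\<dots> = (\<Sum>e'\<in>EA. of_nat (if even (c e') then 2 else 0))"
      by (rule sum.cong) auto
    also have "\<dots> = of_nat (\<Sum>e'\<in>EA. (if even (c e') then 2 else 0))" by simp
    finally have "(\<Sum>e'\<in>EA. (if even (c e') then 2 else 0::nat)) = 0" by (metis of_nat_eq_0_iff)
    then have "\<forall>e'\<in>EA. (if even (c e') then 2 else 0::nat) = 0" using finEA by simp
    then have "odd (c e)" using eEA by (metis numeral_2_eq_2 nat.distinct(1))
    then show ?thesis unfolding c_def .
  qed
  have "good C S" unfolding good_def using SC oddS by blast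
  then show ?thesis using i xv unfolding C_def by blast
qed


definition QC :: "nat set \<Rightarrow> (nat \<Rightarrow> complex) set set" where
  "QC C = (\<lambda>S. {vec C S, vec C (C - S)}) ` {S. good C S}"

lemma vec_neg: "S \<subseteq> C \<Longrightarrow> - vec C S = vec C (C - S)"
  unfolding vec_def by (rule ext) auto

lemma supp_vec: "S \<subseteq> C \<Longrightarrow> {l. vec C S l \<noteq> 0} = C"
  unfolding vec_def by auto

lemma vec_inj: "inj_on (vec C) (Pow C)"
proof (rule inj_onI)
  fix S S' assume "S \<in> Pow C" "S' \<in> Pow C" "vec C S = vec C S'"
  then have SC: "S \<subseteq> C" "S' \<subseteq> C" "vec C S = vec C S'" by auto
  have "l \<in> S \<longleftrightarrow> l \<in> S'" for l
  proof -
    have "l \<in> S \<longleftrightarrow> vec C S l = -1" using vec_neg_iff[OF SC(1)] by simp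
    also have "\<dots> \<longleftrightarrow> vec C S' l = -1" using SC(3) by simp
    also have "\<dots> \<longleftrightarrow> l \<in> S'" using vec_neg_iff[OF SC(2)] by simp
    finally show ?thesis .
  qed
  then show "S = S'" by blast
qed

lemma F_eq: "F = (\<Union>C\<in>components n E. vec C ` {S. good C S})"
proof
  show "F \<subseteq> (\<Union>C\<in>components n E. vec C ` {S. good C S})"
  proof
    fix x assume "x \<in> F"
    then obtain i S where "i \<in> {1..n}" "good (R``{i}) S" "x = vec (R``{i}) S" using char1 by blast
    then show "x \<in> (\<Union>C\<in>components n E. vec C ` {S. good C S})" unfolding comps by blast
  qed
next
  show "(\<Union>C\<in>components n E. vec C ` {S. good C S}) \<subseteq> F"
    unfolding comps using char2 by blast
qed

lemma Q_eq: "(\<lambda>x. {x, - x}) ` F = (\<Union>C\<in>components n E. QC C)"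
proof -
  have "(\<lambda>x. {x, - x}) ` F = (\<Union>C\<in>components n E. (\<lambda>x. {x, - x}) ` vec C ` {S. good C S})"
    unfolding F_eq by (simp add: image_UN)
  also have "\<dots> = (\<Union>C\<in>components n E. QC C)"
  proof (rule SUP_cong[OF refl])
    fix C
    show "(\<lambda>x. {x, - x}) ` vec C ` {S. good C S} = QC C"
      unfolding QC_def image_image
    proof (rule image_cong[OF refl])
      fix S assume "S \<in> {S. good C S}"
      then have "S \<subseteq> C" unfolding good_def by simp
      then show "{vec C S, - vec C S} = {vec C S, vec C (C - S)}" using vec_neg by simp
    qed
  qed
  finally show ?thesis .
qed

lemma comp_props: "C \<in> components n E \<Longrightarrow> \<exists>i\<in>{1..n}. C = R``{i}"
  unfolding comps by blast

lemma finC: "C \<in> components n E \<Longrightarrow> finite C"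
proof -
  assume "C \<in> components n E"
  then obtain i where "i \<in> {1..n}" "C = R``{i}" using comp_props by blast
  then have "C \<subseteq> {1..n}" using cls_sub by simp
  then show "finite C" using finite_subset by blast
qed

lemma QC_fin: "C \<in> components n E \<Longrightarrow> finite (QC C)"
proof -
  assume "C \<in> components n E"
  then have "finite (Pow C)" using finC by simp
  moreover have "{S. good C S} \<subseteq> Pow C" unfolding good_def by auto
  ultimately have "finite {S. good C S}" by (rule finite_subset[rotated])
  then show "finite (QC C)" unfolding QC_def by simp
qed

lemma QC_disj: "C \<in> components n E \<Longrightarrow> C' \<in> components n E \<Longrightarrow> C \<noteq> C' \<Longrightarrow> QC C \<inter> QC C' = {}"
proof (rule ccontr)
  assume "C \<noteq> C'" "QC C \<inter> QC C' \<noteq> {}"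
  then obtain p where "p \<in> QC C" "p \<in> QC C'" by blast
  then obtain S S' where S: "good C S" "p = {vec C S, vec C (C - S)}"
    and S': "good C' S'" "p = {vec C' S', vec C' (C' - S')}" unfolding QC_def by blast
  have SC: "S \<subseteq> C" and SC': "S' \<subseteq> C'" using S S' unfolding good_def by auto
  have "vec C S = vec C' S' \<or> vec C S = vec C' (C' - S')" using S S' by blast
  then have "{l. vec C S l \<noteq> 0} = C'" using supp_vec[OF SC'] supp_vec[of "C' - S'" C'] by auto
  then show False using supp_vec[OF SC] \<open>C \<noteq> C'\<close> by simp
qed

lemma QC_card: assumes C: "C \<in> components n E" shows "card (QC C) = component_contribution E C"
proof -
  obtain i where i: "i \<in> {1..n}" and Ci: "C = R``{i}" using comp_props[OF C] by blast
  have iC: "i \<in> C" using Ci by simp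
  have fC: "finite C" using finC[OF C] .
  show ?thesis
  proof (cases "card C = 1")
    case True
    then obtain c where "C = {c}" by (rule card_1_singletonE)
    then have Cs: "C = {i}" using iC by simp
    have noe: "\<not> (e \<in> E \<and> e \<subseteq> C)" for e
    proof
      assume "e \<in> E \<and> e \<subseteq> C"
      then have "card e \<le> card {i}" using Cs by (intro card_mono) auto
      then show False using E_card \<open>e \<in> E \<and> e \<subseteq> C\<close> k4 by fastforce
    qed
    have gs: "{S. good C S} = {{}, C}" unfolding good_def using noe Cs by auto
    have "QC C = {{vec C {}, vec C C}}" unfolding QC_def gs by auto
    then show ?thesis unfolding component_contribution_def using True by simp
  next
    case False
    have "card C \<noteq> 0" using fC iC by auto
    then have "card C \<ge> 2" using False by simp
    have "\<not> C \<subseteq> {i}"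
    proof
      assume "C \<subseteq> {i}"
      then have "card C \<le> card {i}" by (intro card_mono) auto
      then show False using \<open>card C \<ge> 2\<close> by simp
    qed
    then obtain j where jC: "j \<in> C" and ji: "j \<noteq> i" by blast
    have "(i,j) \<in> R" using jC Ci by simp
    then obtain m where "(i,m) \<in> hadj E" using ji by (cases rule: converse_rtranclE) auto
    then obtain e0 where e0: "e0 \<in> E" "i \<in> e0" unfolding hadj_def by blast
    have e0C: "e0 \<subseteq> C" using edge_in_cls[of i i e0] e0 Ci unfolding edges_at_def by simp
    have ke0: "card e0 = k" using E_card[OF e0(1)] .
    define g where "g P = vec C ` P" for P
    have sub: "P \<subseteq> Pow C" if "P \<in> odd_bipartitions E C" for P
      using that unfolding odd_bipartitions_def by blast
    have inj: "inj_on g (odd_bipartitions E C)"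
    proof (rule inj_onI)
      fix P P' assume "P \<in> odd_bipartitions E C" "P' \<in> odd_bipartitions E C" "g P = g P'"
      then show "P = P'" using inj_on_image_eq_iff[OF vec_inj sub sub] unfolding g_def by blast
    qed
    have eq: "QC C = g ` odd_bipartitions E C"
    proof
      show "QC C \<subseteq> g ` odd_bipartitions E C"
      proof
        fix p assume "p \<in> QC C"
        then obtain S where S: "good C S" "p = {vec C S, vec C (C - S)}" unfolding QC_def by blast
        have SC: "S \<subseteq> C" and od: "\<forall>e\<in>E. e \<subseteq> C \<longrightarrow> odd (card (e \<inter> S))" using S unfolding good_def by auto
        have "S \<noteq> {}" using od e0 e0C by fastforce
        moreover have "C - S \<noteq> {}"
        proof
          assume "C - S = {}" then have "S = C" using SC by blast
          then have "e0 \<inter> S = e0" using e0C by blast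
          then show False using od e0 e0C ke0 ke by auto
        qed
        ultimately have "{S, C - S} \<in> odd_bipartitions E C"
          unfolding odd_bipartitions_def using SC od by blast
        moreover have "g {S, C - S} = p" unfolding g_def S by simp
        ultimately show "p \<in> g ` odd_bipartitions E C" by blast
      qed
    next
      show "g ` odd_bipartitions E C \<subseteq> QC C"
      proof
        fix p assume "p \<in> g ` odd_bipartitions E C"
        then obtain S T where ST: "p = g {S, T}" "S \<inter> T = {}" "S \<union> T = C"
          "\<forall>e\<in>E. e \<subseteq> C \<longrightarrow> odd (card (e \<inter> S))"
          unfolding odd_bipartitions_def by blast
        have T: "T = C - S" using ST by blast
        have "good C S" unfolding good_def using ST by blast
        moreover have "p = {vec C S, vec C (C - S)}" using ST T unfolding g_def by simp
        ultimately show "p \<in> QC C" unfolding QC_def by blast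
      qed
    qed
    have "card (QC C) = card (odd_bipartitions E C)" unfolding eq using inj by (rule card_image)
    then show ?thesis unfolding component_contribution_def using False by simp
  qed
qed

lemma main:
  "finite ((\<lambda>x. {x, - x}) ` F) \<and> card ((\<lambda>x. {x, - x}) ` F) = num_odd_bipartite_components n E"
proof -
  have fc: "finite (components n E)" unfolding comps by simp
  have "finite (\<Union>C\<in>components n E. QC C)" using fc QC_fin by blast
  moreover have "card (\<Union>C\<in>components n E. QC C) = (\<Sum>C\<in>components n E. card (QC C))"
    using fc QC_fin QC_disj by (intro card_UN_disjoint) auto
  moreover have "(\<Sum>C\<in>components n E. card (QC C)) = num_odd_bipartite_components n E"
    unfolding num_odd_bipartite_components_def using QC_card by (intro sum.cong) auto
  ultimately show ?thesis unfolding Q_eq by simp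
qed

end

theorem proposition5p1:
  fixes k n :: nat and E :: "nat set set"
  assumes "k \<ge> 4" and "even k" and "k_uniform_hypergraph k n E"
  shows "finite ((\<lambda>x. {x, - x}) ` min_canon_H_zero_eigvecs k n E) \<and>
         card ((\<lambda>x. {x, - x}) ` min_canon_H_zero_eigvecs k n E) = num_odd_bipartite_components n E"
proof -
  interpret hg k n E using assms by unfold_locales auto
  show ?thesis by (rule main)
qed

end
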